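(* Let $k$ be a field, $n\ge1$, and $\underline{V}=(V_0;V_1,\dots,V_n)$ an $n$-subspace. The natural inclusion $\underline{V}^{\mathrm{rig}}\subset\underline{V}$ admits a retraction in the category of $n$-subspaces. More precisely, there exist $1$-subspaces $\underline{V}^1,\dots,\underline{V}^n$ and an isomorphism of $n$-subspaces $\underline{V}\cong\big(\bigoplus_{i=1}^n F^i\underline{V}^i\big)\oplus\underline{V}^{\mathrm{rig}}$ under which the inclusion $\underline{V}^{\mathrm{rig}}\subset\underline{V}$ corresponds to the inclusion of the direct summand.
   Context: An $n$-subspace $\underline{V}$ is a $k$-vector space $V_0$ together with subspaces $V_1,\dots,V_n\subset V_0$; morphisms are linear maps $V_0\to W_0$ carrying each $V_i$ into $W_i$. Its rigidification $\underline{V}^{\mathrm{rig}}$ is the $n$-subspace with $V^{\mathrm{rig}}_i=V_i\cap\big(\sum_{j\neq 0,i}V_j\big)$ for $1\le i\le n$ and $V^{\mathrm{rig}}_0=\sum_{i=1}^nV^{\mathrm{rig}}_i$. For a $1$-subspace $\underline{W}=(W_0;W_1)$, $F^i\underline{W}$ is the $n$-subspace with ambient space $W_0$, $i$-th subspace $W_1$ and all other subspaces $0$. *)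

theory Defs
  imports Main "HOL.Vector_Spaces"
begin

definition n_subspace ::
  "('k::field \<Rightarrow> 'v::ab_group_add \<Rightarrow> 'v) \<Rightarrow> nat \<Rightarrow> 'v set \<Rightarrow> (nat \<Rightarrow> 'v set) \<Rightarrow> bool" where
  "n_subspace scale n V0 V \<longleftrightarrow> module.subspace scale V0 \<and>
     (\<forall>i\<in>{1..n}. module.subspace scale (V i) \<and> V i \<subseteq> V0)"

definition rig_sub ::
  "('k::field \<Rightarrow> 'v::ab_group_add \<Rightarrow> 'v) \<Rightarrow> nat \<Rightarrow> (nat \<Rightarrow> 'v set) \<Rightarrow> nat \<Rightarrow> 'v set" where
  "rig_sub scale n V i = V i \<inter> module.span scale (\<Union>j\<in>{1..n} - {i}. V j)"

definition rig_amb ::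
  "('k::field \<Rightarrow> 'v::ab_group_add \<Rightarrow> 'v) \<Rightarrow> nat \<Rightarrow> (nat \<Rightarrow> 'v set) \<Rightarrow> 'v set" where
  "rig_amb scale n V = module.span scale (\<Union>i\<in>{1..n}. rig_sub scale n V i)"

text \<open>External direct sum (F^1 W^1 \<oplus> ... \<oplus> F^n W^n) \<oplus> R of n-subspaces, realised on
  pairs (f, r) with f i the component in W^i (f i = 0 for i outside 1..n), r in R.
  A 1-subspace W^i is (W0 i; W1 i).\<close>
definition ds_amb :: "nat \<Rightarrow> (nat \<Rightarrow> 'v::zero set) \<Rightarrow> 'v set \<Rightarrow> ((nat \<Rightarrow> 'v) \<times> 'v) set" where
  "ds_amb n W0 R0 = {(f, r). (\<forall>i\<in>{1..n}. f i \<in> W0 i) \<and> (\<forall>i. i \<notin> {1..n} \<longrightarrow> f i = 0) \<and> r \<in> R0}"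

text \<open>j-th subspace of the direct sum: F^i W^i has j-th subspace W1 i if i = j, else 0.\<close>
definition ds_sub :: "(nat \<Rightarrow> 'v::zero set) \<Rightarrow> (nat \<Rightarrow> 'v set) \<Rightarrow> nat \<Rightarrow> ((nat \<Rightarrow> 'v) \<times> 'v) set" where
  "ds_sub W1 R j = {(f, r). f j \<in> W1 j \<and> (\<forall>i. i \<noteq> j \<longrightarrow> f i = 0) \<and> r \<in> R j}"

definition ds_add :: "((nat \<Rightarrow> 'v::plus) \<times> 'v) \<Rightarrow> ((nat \<Rightarrow> 'v) \<times> 'v) \<Rightarrow> ((nat \<Rightarrow> 'v) \<times> 'v)" where
  "ds_add x y = ((\<lambda>i. fst x i + fst y i), snd x + snd y)"

definition ds_scale :: "('k \<Rightarrow> 'v \<Rightarrow> 'v) \<Rightarrow> 'k \<Rightarrow> ((nat \<Rightarrow> 'v) \<times> 'v) \<Rightarrow> ((nat \<Rightarrow> 'v) \<times> 'v)" where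
  "ds_scale scale c x = ((\<lambda>i. scale c (fst x i)), scale c (snd x))"

end

theory Submission
  imports Defs
begin

context vector_space
begin

lemma complement_exists:
  assumes "subspace U" "subspace S" "U \<subseteq> S"
  shows "\<exists>C. subspace C \<and> C \<subseteq> S \<and> U \<inter> C \<subseteq> {0} \<and> (\<forall>s\<in>S. \<exists>u\<in>U. \<exists>c\<in>C. s = u + c)"
proof -
  obtain B where B: "B \<subseteq> U" "independent B" "U \<subseteq> span B"
    using maximal_independent_subset by blast
  obtain B' where B': "B \<subseteq> B'" "B' \<subseteq> S" "independent B'" "S \<subseteq> span B'"
    using maximal_independent_subset_extend[of B S] B assms(3) by blast
  have spB: "span B = U" using B assms(1) by (simp add: span_subspace)
  define C where "C = span (B' - B)"
  have "subspace C" unfolding C_def by simp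
  moreover have "C \<subseteq> S" unfolding C_def using B' assms(2) by (meson Diff_subset order_trans span_minimal)
  moreover have "U \<inter> C \<subseteq> {0}"
  proof
    fix x assume x: "x \<in> U \<inter> C"
    have r1: "representation B' x = representation B x"
      using representation_extend[OF B'(3), of x B] x spB B'(1) by auto
    have r2: "representation B' x = representation (B' - B) x"
      using representation_extend[OF B'(3), of x "B' - B"] x C_def by auto
    have z: "representation B' x = (\<lambda>b. 0)"
    proof
      fix b
      show "representation B' x b = 0"
        using representation_ne_zero[of B x b] representation_ne_zero[of "B' - B" x b] r1 r2
        by (metis DiffD2)
    qed
    have "x \<in> span B'" using x r1 spB B'(1) span_mono by blast
    then have "x = (\<Sum>b | representation B' x b \<noteq> 0. representation B' x b *s b)"
      using sum_nonzero_representation_eq[OF B'(3)] by simp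
    then show "x \<in> {0}" using z by simp
  qed
  moreover have "\<forall>s\<in>S. \<exists>u\<in>U. \<exists>c\<in>C. s = u + c"
  proof
    fix s assume "s \<in> S"
    then have "s \<in> span (B \<union> (B' - B))" using B'(1,4) by (metis Un_Diff_cancel sup.absorb_iff2 subsetD)
    then show "\<exists>u\<in>U. \<exists>c\<in>C. s = u + c" unfolding span_Un C_def spB by blast
  qed
  ultimately show ?thesis by blast
qed

lemma span_UN_sum:
  assumes "finite I" "\<forall>i\<in>I. subspace (A i)" "x \<in> span (\<Union>i\<in>I. A i)"
  shows "\<exists>a. (\<forall>i\<in>I. a i \<in> A i) \<and> x = sum a I"
  using assms
proof (induction I arbitrary: x rule: finite_induct)
  case empty
  then show ?case by simp
next
  case (insert i I)
  have "x \<in> span (A i \<union> (\<Union>i\<in>I. A i))" using insert.prems by simp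
  then obtain y z where yz: "y \<in> span (A i)" "z \<in> span (\<Union>i\<in>I. A i)" "x = y + z"
    unfolding span_Un by blast
  have y: "y \<in> A i" using yz(1) insert.prems(1) span_eq_iff by (metis insertI1)
  obtain a where a: "\<forall>i\<in>I. a i \<in> A i" "z = sum a I" using insert.IH[of z] insert.prems yz(2) by auto
  define a' where "a' = a(i := y)"
  have "sum a' (insert i I) = y + sum a I"
    using insert.hyps by (simp add: a'_def sum.insert, intro sum.cong) auto
  moreover have "\<forall>j\<in>insert i I. a' j \<in> A j" using a y by (auto simp: a'_def)
  ultimately show ?case using yz a by metis
qed

end


theorem proposition8p4:
  fixes scale :: "'k::field \<Rightarrow> 'v::ab_group_add \<Rightarrow> 'v"
    and n :: nat and V0 :: "'v set" and V :: "nat \<Rightarrow> 'v set"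
  assumes "vector_space scale"
    and "n \<ge> 1"
    and "n_subspace scale n V0 V"
  shows "\<exists>(W0 :: nat \<Rightarrow> 'v set) (W1 :: nat \<Rightarrow> 'v set) (\<phi> :: 'v \<Rightarrow> (nat \<Rightarrow> 'v) \<times> 'v).
    (\<forall>i\<in>{1..n}. module.subspace scale (W0 i) \<and> module.subspace scale (W1 i) \<and> W1 i \<subseteq> W0 i) \<and>
    (\<forall>x\<in>V0. \<forall>y\<in>V0. \<phi> (x + y) = ds_add (\<phi> x) (\<phi> y)) \<and>
    (\<forall>c. \<forall>x\<in>V0. \<phi> (scale c x) = ds_scale scale c (\<phi> x)) \<and>
    bij_betw \<phi> V0 (ds_amb n W0 (rig_amb scale n V)) \<and>
    (\<forall>j\<in>{1..n}. \<phi> ` V j = ds_sub W1 (rig_sub scale n V) j) \<and>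
    (\<forall>v\<in>rig_amb scale n V. \<phi> v = ((\<lambda>_. 0), v))"
proof -
  interpret vector_space scale by fact
  define I where "I = {1..n}"
  have finI: "finite I" and oneI: "1 \<in> I" using assms(2) by (auto simp: I_def)
  define R where "R = rig_sub scale n V"
  define R0 where "R0 = rig_amb scale n V"
  have sV0: "subspace V0" and sV: "\<And>i. i \<in> I \<Longrightarrow> subspace (V i)"
    and VV0: "\<And>i. i \<in> I \<Longrightarrow> V i \<subseteq> V0"
    using assms(3) by (auto simp: n_subspace_def I_def)
  have sR: "\<And>i. i \<in> I \<Longrightarrow> subspace (R i)"
    using sV unfolding R_def rig_sub_def by (intro subspace_inter) auto
  have RV: "\<And>i. R i \<subseteq> V i" by (auto simp: R_def rig_sub_def)
  have R0_def': "R0 = span (\<Union>i\<in>I. R i)" by (simp add: R0_def rig_amb_def R_def I_def)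
  have sR0: "subspace R0" by (simp add: R0_def')
  have R0V0: "R0 \<subseteq> V0" unfolding R0_def' proof (rule span_minimal[OF _ sV0])
    show "(\<Union>i\<in>I. R i) \<subseteq> V0" using RV VV0 by blast
  qed
  have "\<forall>i\<in>I. \<exists>C. subspace C \<and> C \<subseteq> V i \<and> R i \<inter> C \<subseteq> {0} \<and> (\<forall>s\<in>V i. \<exists>u\<in>R i. \<exists>c\<in>C. s = u + c)"
  proof
    fix i assume i: "i \<in> I"
    show "\<exists>C. subspace C \<and> C \<subseteq> V i \<and> R i \<inter> C \<subseteq> {0} \<and> (\<forall>s\<in>V i. \<exists>u\<in>R i. \<exists>c\<in>C. s = u + c)"
      by (rule complement_exists[OF sR[OF i] sV[OF i] RV])
  qed
  from bchoice[OF this] obtain C where C0: "\<forall>i\<in>I. subspace (C i) \<and> C i \<subseteq> V i \<and> R i \<inter> C i \<subseteq> {0} \<and> (\<forall>s\<in>V i. \<exists>u\<in>R i. \<exists>c\<in>C i. s = u + c)"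
    by blast
  have C: "\<And>i. i \<in> I \<Longrightarrow> subspace (C i) \<and> C i \<subseteq> V i \<and> R i \<inter> C i \<subseteq> {0} \<and> (\<forall>s\<in>V i. \<exists>u\<in>R i. \<exists>c\<in>C i. s = u + c)"
    by (rule bspec[OF C0])
  have CV0: "\<And>i. i \<in> I \<Longrightarrow> C i \<subseteq> V0" using C VV0 by blast
  define S where "S = span (R0 \<union> (\<Union>i\<in>I. C i))"
  have sS: "subspace S" by (simp add: S_def)
  have SV0: "S \<subseteq> V0" unfolding S_def using R0V0 C VV0 sV0 by (intro span_minimal) blast+
  obtain D where D: "subspace D" "D \<subseteq> V0" "S \<inter> D \<subseteq> {0}" "\<forall>s\<in>V0. \<exists>u\<in>S. \<exists>c\<in>D. s = u + c"
    using complement_exists[OF sS sV0 SV0] by blast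
  define rep where "rep v d c r \<longleftrightarrow> d \<in> D \<and> (\<forall>i\<in>I. c i \<in> C i) \<and> (\<forall>i. i \<notin> I \<longrightarrow> c i = 0) \<and> r \<in> R0 \<and> v = d + sum c I + r"
    for v d c r
  have Z: "d = 0 \<and> c = (\<lambda>_. 0) \<and> r = 0" if "rep 0 d c r" for d c r
  proof -
    have r: "d \<in> D" "\<forall>i\<in>I. c i \<in> C i" "\<forall>i. i \<notin> I \<longrightarrow> c i = 0" "r \<in> R0" "0 = d + sum c I + r"
      using that by (auto simp: rep_def)
    have "sum c I + r \<in> S" unfolding S_def
      using r(2,4) by (intro span_add span_sum) (auto intro: span_base)
    moreover have "d = - (sum c I + r)" using r(5) by (metis add.assoc add_eq_0_iff2)
    ultimately have "d \<in> S" using sS subspace_neg by fastforce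
    then have d0: "d = 0" using D(3) r(1) by blast
    then have sum0: "sum c I + r = 0" using r(5) by simp
    obtain rr where rr: "\<forall>i\<in>I. rr i \<in> R i" "r = sum rr I"
      using span_UN_sum[OF finI, of R r] sR r(4) R0_def' by blast
    have cj: "c j = 0" if j: "j \<in> I" for j
    proof -
      have "sum (\<lambda>i. c i + rr i) I = 0" using sum0 rr by (simp add: sum.distrib)
      then have "(c j + rr j) + sum (\<lambda>i. c i + rr i) (I - {j}) = 0"
        using sum.remove[OF finI j, of "\<lambda>i. c i + rr i"] by simp
      then have e: "c j + rr j = - sum (\<lambda>i. c i + rr i) (I - {j})"
        by (simp add: eq_neg_iff_add_eq_0)
      have "sum (\<lambda>i. c i + rr i) (I - {j}) \<in> span (\<Union>i\<in>{1..n} - {j}. V i)"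
      proof (intro span_sum)
        fix i assume i: "i \<in> I - {j}"
        have "c i + rr i \<in> V i" using i C r(2) rr(1) RV sV by (meson DiffD1 subsetD subspace_add)
        moreover have "i \<in> {1..n} - {j}" using i I_def by simp
        ultimately show "c i + rr i \<in> span (\<Union>i\<in>{1..n} - {j}. V i)" by (intro span_base) blast
      qed
      then have "c j + rr j \<in> span (\<Union>i\<in>{1..n} - {j}. V i)" using e span_neg by simp
      moreover have "c j + rr j \<in> V j" using j C r(2) rr(1) RV sV by (meson subsetD subspace_add)
      ultimately have "c j + rr j \<in> R j" by (simp add: R_def rig_sub_def)
      then have "(c j + rr j) - rr j \<in> R j" using sR[OF j] rr(1) j subspace_diff by blast
      then have "c j \<in> R j" by simp
      then show ?thesis using C[OF j] r(2) j by blast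
    qed
    have c0: "c = (\<lambda>_. 0)" using cj r(3) by auto
    then show ?thesis using d0 sum0 by simp
  qed
  have U: "d = d' \<and> c = c' \<and> r = r'" if "rep v d c r" "rep v d' c' r'" for v d c r d' c' r'
  proof -
    have "rep 0 (d - d') (\<lambda>i. c i - c' i) (r - r')"
      using that D(1) C sR0 unfolding rep_def
      by (auto simp: subspace_diff sum_subtractf algebra_simps)
    from Z[OF this] show ?thesis by (auto simp: fun_eq_iff)
  qed
  have Add: "rep (x + y) (d + d') (\<lambda>i. c i + c' i) (r + r')" if "rep x d c r" "rep y d' c' r'" for x y d c r d' c' r'
    using that D(1) C sR0 unfolding rep_def
    by (auto simp: subspace_add sum.distrib algebra_simps)
  have Scl: "rep (scale k x) (scale k d) (\<lambda>i. scale k (c i)) (scale k r)" if "rep x d c r" for k x d c r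
  proof -
    have r: "d \<in> D" "\<forall>i\<in>I. c i \<in> C i" "\<forall>i. i \<notin> I \<longrightarrow> c i = 0" "r \<in> R0" "x = d + sum c I + r"
      using that by (auto simp: rep_def)
    have "scale k d \<in> D" using r(1) D(1) by (rule subspace_scale[rotated])
    moreover have "\<forall>i\<in>I. scale k (c i) \<in> C i"
    proof
      fix i assume i: "i \<in> I"
      have "subspace (C i)" using C[OF i] by blast
      then show "scale k (c i) \<in> C i" using r(2) i subspace_scale by blast
    qed
    moreover have "\<forall>i. i \<notin> I \<longrightarrow> scale k (c i) = 0" using r(3) by simp
    moreover have "scale k r \<in> R0" using r(4) sR0 subspace_scale by blast
    moreover have "scale k x = scale k d + sum (\<lambda>i. scale k (c i)) I + scale k r"
      using r(5) by (simp add: scale_right_distrib scale_sum_right)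
    ultimately show ?thesis unfolding rep_def by blast
  qed
  have E: "\<exists>d c r. rep v d c r" if "v \<in> V0" for v
  proof -
    have "\<exists>u\<in>S. \<exists>c\<in>D. v = u + c" by (rule bspec[OF D(4) that])
    then obtain s d where sd: "s \<in> S" "d \<in> D" "v = s + d" by blast
    have "s \<in> {x + y | x y. x \<in> span R0 \<and> y \<in> span (\<Union>i\<in>I. C i)}"
      using sd(1) unfolding S_def span_Un .
    then obtain r y where ry: "r \<in> span R0" "y \<in> span (\<Union>i\<in>I. C i)" "s = r + y"
      by blast
    have "span R0 = R0" using span_eq_iff[THEN iffD2, OF sR0] .
    then have rR0: "r \<in> R0" using ry(1) by blast
    obtain cc where cc: "\<forall>i\<in>I. cc i \<in> C i" "y = sum cc I"
    proof -
      have "\<forall>i\<in>I. subspace (C i)"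
      proof
        fix i assume "i \<in> I"
        from C[OF this] show "subspace (C i)" by (rule conjunct1)
      qed
      from span_UN_sum[OF finI this ry(2)] obtain a where "\<forall>i\<in>I. a i \<in> C i" "y = sum a I" by blast
      then show ?thesis by (rule that)
    qed
    define c where "c i = (if i \<in> I then cc i else 0)" for i
    have "sum c I = sum cc I" by (simp add: c_def)
    then have "v = d + sum c I + r" using sd(3) ry(3) cc(2) by (simp add: algebra_simps)
    moreover have "\<forall>i\<in>I. c i \<in> C i" using cc(1) by (simp add: c_def)
    moreover have "\<forall>i. i \<notin> I \<longrightarrow> c i = 0" by (simp add: c_def)
    ultimately have "rep v d c r" using sd(2) rR0 unfolding rep_def by blast
    then show ?thesis by blast
  qed
  define dec where "dec v = (SOME t. rep v (fst t) (fst (snd t)) (snd (snd t)))" for v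
  have decI: "dec v = (d, c, r)" if "rep v d c r" for v d c r
  proof -
    have "rep v (fst (dec v)) (fst (snd (dec v))) (snd (snd (dec v)))"
      unfolding dec_def by (rule someI[of _ "(d, c, r)"]) (simp add: that)
    from U[OF this that] show ?thesis by (simp add: prod_eq_iff)
  qed
  define mk where "mk d c r = ((\<lambda>i::nat. if i = 1 then d + c i else c i), r)" for d :: 'v and c :: "nat \<Rightarrow> 'v" and r :: 'v
  define phi where "phi v = mk (fst (dec v)) (fst (snd (dec v))) (snd (snd (dec v)))" for v
  have phiI: "phi v = mk d c r" if "rep v d c r" for v d c r
    using decI[OF that] by (simp add: phi_def)
  have recon: "v = sum (fst (phi v)) I + snd (phi v)" if "rep v d c r" for v d c r
  proof -
    have "sum (\<lambda>i. if i = 1 then d + c i else c i) I = sum (\<lambda>i. (if i = 1 then d else 0) + c i) I"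
      by (intro sum.cong) auto
    also have "\<dots> = d + sum c I" using finI oneI by (simp add: sum.distrib)
    finally show ?thesis using that phiI[OF that] by (simp add: mk_def rep_def)
  qed
  define W0 where "W0 i = (if i = 1 then {x + y | x y. x \<in> D \<and> y \<in> C 1} else C i)" for i
  have P1: "\<forall>i\<in>{1..n}. subspace (W0 i) \<and> subspace (C i) \<and> C i \<subseteq> W0 i"
  proof
    fix i assume i: "i \<in> {1..n}"
    then have iI: "i \<in> I" by (simp add: I_def)
    have "C 1 \<subseteq> {x + y | x y. x \<in> D \<and> y \<in> C 1}"
      using D(1) subspace_0 by force
    then show "subspace (W0 i) \<and> subspace (C i) \<and> C i \<subseteq> W0 i"
      using C[OF iI] C[OF oneI] D(1) by (auto simp: W0_def intro: subspace_sums)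
  qed
  have P2: "\<forall>x\<in>V0. \<forall>y\<in>V0. phi (x + y) = ds_add (phi x) (phi y)"
  proof (intro ballI)
    fix x y assume "x \<in> V0" "y \<in> V0"
    then obtain d c r d' c' r' where h: "rep x d c r" "rep y d' c' r'" using E by meson
    show "phi (x + y) = ds_add (phi x) (phi y)"
      using phiI[OF Add[OF h]] phiI[OF h(1)] phiI[OF h(2)] by (simp add: ds_add_def mk_def fun_eq_iff)
  qed
  have P3: "\<forall>k. \<forall>x\<in>V0. phi (scale k x) = ds_scale scale k (phi x)"
  proof (intro allI ballI)
    fix k x assume "x \<in> V0"
    then obtain d c r where h: "rep x d c r" using E by meson
    show "phi (scale k x) = ds_scale scale k (phi x)"
      using phiI[OF Scl[OF h]] phiI[OF h] by (simp add: ds_scale_def mk_def fun_eq_iff scale_right_distrib)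
  qed
  have P4: "bij_betw phi V0 (ds_amb n W0 R0)"
    unfolding bij_betw_def
  proof (intro conjI)
    show "inj_on phi V0"
    proof
      fix x y assume "x \<in> V0" "y \<in> V0" "phi x = phi y"
      then show "x = y"
      proof -
        obtain d c r where "rep x d c r" using E \<open>x \<in> V0\<close> by meson
        moreover obtain d' c' r' where "rep y d' c' r'" using E \<open>y \<in> V0\<close> by meson
        ultimately show ?thesis using recon \<open>phi x = phi y\<close> by metis
      qed
    qed
    show "phi ` V0 = ds_amb n W0 R0"
    proof
      show "phi ` V0 \<subseteq> ds_amb n W0 R0"
      proof
        fix z assume "z \<in> phi ` V0"
        then obtain x where x: "x \<in> V0" "z = phi x" by blast
        then obtain d c r where rp: "rep x d c r" using E by meson
        have "mk d c r \<in> ds_amb n W0 R0"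
          using rp oneI unfolding mk_def ds_amb_def rep_def W0_def I_def by (auto 0 4)
        then show "z \<in> ds_amb n W0 R0" using x phiI[OF rp] by simp
      qed
      show "ds_amb n W0 R0 \<subseteq> phi ` V0"
      proof
        fix z assume z: "z \<in> ds_amb n W0 R0"
        obtain f r where fr: "z = (f, r)" by (cases z)
        have f: "\<forall>i\<in>I. f i \<in> W0 i" "\<forall>i. i \<notin> I \<longrightarrow> f i = 0" "r \<in> R0"
          using z fr by (auto simp: ds_amb_def I_def)
        obtain d y where dy: "d \<in> D" "y \<in> C 1" "f 1 = d + y"
        proof -
          have "f 1 \<in> W0 1" using f(1) oneI by blast
          then show ?thesis using that unfolding W0_def by auto
        qed
        define c where "c = f(1 := y)"
        define v where "v = d + sum c I + r"
        have rp: "rep v d c r" unfolding rep_def v_def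
          using dy f oneI by (auto simp: c_def W0_def)
        have "v \<in> V0" unfolding v_def
        proof (intro subspace_add[OF sV0])
          show "d \<in> V0" using dy D(2) by blast
          show "r \<in> V0" using f R0V0 by blast
          show "sum c I \<in> V0" using rp CV0 unfolding rep_def by (intro subspace_sum[OF sV0]) blast
        qed
        moreover have "phi v = z" using phiI[OF rp] dy fr by (auto simp: mk_def c_def)
        ultimately show "z \<in> phi ` V0" by blast
      qed
    qed
  qed
  have P5: "\<forall>j\<in>{1..n}. phi ` V j = ds_sub C R j"
  proof
    fix j assume "j \<in> {1..n}"
    then have j: "j \<in> I" by (simp add: I_def)
    show "phi ` V j = ds_sub C R j"
    proof
      show "phi ` V j \<subseteq> ds_sub C R j"
      proof
        fix z assume "z \<in> phi ` V j"
        then obtain v where v: "v \<in> V j" "z = phi v" by blast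
        then obtain u cj where ucj: "u \<in> R j" "cj \<in> C j" "v = u + cj" using C[OF j] by blast
        have "u \<in> R0" unfolding R0_def' using ucj j by (auto intro: span_base)
        moreover have "sum (\<lambda>i. if i = j then cj else 0) I = cj" using finI j by simp
        ultimately have rp: "rep v 0 (\<lambda>i. if i = j then cj else 0) u"
          unfolding rep_def using ucj j D(1) subspace_0 C
          by (auto simp: algebra_simps)
        show "z \<in> ds_sub C R j" using phiI[OF rp] v ucj by (auto simp: mk_def ds_sub_def)
      qed
      show "ds_sub C R j \<subseteq> phi ` V j"
      proof
        fix z assume z: "z \<in> ds_sub C R j"
        obtain f r where fr: "z = (f, r)" by (cases z)
        have f: "f j \<in> C j" "\<forall>i. i \<noteq> j \<longrightarrow> f i = 0" "r \<in> R j"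
          using z fr by (auto simp: ds_sub_def)
        have fe: "f = (\<lambda>i. if i = j then f j else 0)" using f(2) by auto
        have sf: "sum f I = f j" using finI j by (subst fe) simp
        have "r \<in> R0" unfolding R0_def' using f j by (auto intro: span_base)
        moreover have "\<forall>i\<in>I. f i \<in> C i"
        proof
          fix i assume i: "i \<in> I"
          show "f i \<in> C i" using f(1,2) C[OF i] subspace_0 by (cases "i = j") auto
        qed
        moreover have "\<forall>i. i \<notin> I \<longrightarrow> f i = 0" using f(2) j by auto
        ultimately have rp: "rep (f j + r) 0 f r"
          unfolding rep_def using sf D(1) subspace_0 by (auto simp: add.commute)
        have "f j + r \<in> V j" using f C[OF j] RV sV[OF j] by (meson subsetD subspace_add)
        moreover have "phi (f j + r) = z" using phiI[OF rp] fr f(2) by (auto simp: mk_def fun_eq_iff)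
        ultimately show "z \<in> phi ` V j" by blast
      qed
    qed
  qed
  have P6: "\<forall>v\<in>R0. phi v = ((\<lambda>_. 0), v)"
  proof
    fix v assume "v \<in> R0"
    then have "rep v 0 (\<lambda>_. 0) v" unfolding rep_def using D(1) subspace_0 C by auto
    from phiI[OF this] show "phi v = ((\<lambda>_. 0), v)" by (simp add: mk_def fun_eq_iff)
  qed
  have "(\<forall>i\<in>{1..n}. module.subspace scale (W0 i) \<and> module.subspace scale (C i) \<and> C i \<subseteq> W0 i) \<and>
    (\<forall>x\<in>V0. \<forall>y\<in>V0. phi (x + y) = ds_add (phi x) (phi y)) \<and>
    (\<forall>c. \<forall>x\<in>V0. phi (scale c x) = ds_scale scale c (phi x)) \<and>
    bij_betw phi V0 (ds_amb n W0 (rig_amb scale n V)) \<and>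
    (\<forall>j\<in>{1..n}. phi ` V j = ds_sub C (rig_sub scale n V) j) \<and>
    (\<forall>v\<in>rig_amb scale n V. phi v = ((\<lambda>_. 0), v))"
    using P1 P2 P3 P4 P5 P6 unfolding R_def R0_def by (intro conjI)
  then show ?thesis by (intro exI)
qed

end
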